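(* Let $V,Y$ be real Banach spaces with $V\hookrightarrow Y$ continuously and densely, $U\subset V$ open, $m\in\mathbb{N}$, $\mathcal{G}\colon U\to\mathbb{R}^m$ analytic, $\mathcal{M}=\{u\in U\mid\mathcal{G}(u)=0\}$, and $\bar u\in U$. Assume: for every $u\in U$ the operator $\mathcal{G}'(u)$ extends to $\overline{\mathcal{G}'(u)}\in\mathcal{L}(Y,\mathbb{R}^m)$ and $u\mapsto\overline{\mathcal{G}'(u)}$ is analytic $U\to\mathcal{L}(Y,\mathbb{R}^m)$; and $\mathcal{G}(\bar u)=0$ with $\mathcal{G}'(\bar u)\colon V\to\mathbb{R}^m$ surjective. Let $V_0=\ker\mathcal{G}'(\bar u)$, let $V_1$ be a closed subspace with $V=V_0\oplus V_1$, let $\Omega_0\subset V_0$, $\Omega_1\subset V_1$ be open with $\bar u\in\Omega:=\Omega_0+\Omega_1\subset U$, and let $\psi\colon\Omega_0\to V$ be analytic with $\psi(\Omega_0)\subset\Omega_1$, $\mathcal{M}\cap\Omega=\{\omega+\psi(\omega)\mid\omega\in\Omega_0\}$, and such that $\mathcal{G}'(u)|_{V_1}\colon V_1\to\mathbb{R}^m$ is an isomorphism for all $u\in\Omega$. Put $\varphi(\omega)=\omega+\psi(\omega)$. Then for every $\omega\in\Omega_0$ and $u=\varphi(\omega)$: (i) $\mathcal{T}_u\mathcal{M}=\ker\mathcal{G}'(u)=\operatorname{Im}\varphi'(\omega)$; (ii) $\overline{\mathcal{T}_u\mathcal{M}}=\ker\overline{\mathcal{G}'(u)}$, where the closure is taken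 in the norm of $Y$; (iii) $\operatorname{codim}(\mathcal{T}_u\mathcal{M},V)=\operatorname{codim}(\overline{\mathcal{T}_u\mathcal{M}},Y)=m$.
   Context: The tangent space is $\mathcal{T}_u\mathcal{M}=\{\gamma'(0)\mid\gamma\in C^1((-\varepsilon,\varepsilon);V),\ \gamma(t)\in\mathcal{M}\cap\Omega\ \forall t,\ \gamma(0)=u\}$. Analytic means locally given by norm-convergent power series of continuous multilinear maps. *)

theory Defs
  imports "HOL-Analysis.Analysis"
begin

text \<open>k-linear maps with all arguments restricted to a subspace E; an argument
  tuple is a function nat => 'a of which only the first k entries matter.\<close>
definition multilinear_on :: "'a::real_vector set \<Rightarrow> nat \<Rightarrow> ((nat \<Rightarrow> 'a) \<Rightarrow> 'b::real_vector) \<Rightarrow> bool" where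
  "multilinear_on E k A \<longleftrightarrow>
     (\<forall>x y. (\<forall>j<k. x j = y j) \<longrightarrow> A x = A y) \<and>
     (\<forall>i<k. \<forall>x. (\<forall>j<k. x j \<in> E) \<longrightarrow>
        (\<forall>a\<in>E. \<forall>b\<in>E. \<forall>c::real. A (x(i := c *\<^sub>R a + b)) = c *\<^sub>R A (x(i := a)) + A (x(i := b))))"

definition mbounded_by :: "'a::real_normed_vector set \<Rightarrow> nat \<Rightarrow> ((nat \<Rightarrow> 'a) \<Rightarrow> 'b::real_normed_vector) \<Rightarrow> real \<Rightarrow> bool" where
  "mbounded_by E k A C \<longleftrightarrow> (\<forall>x. (\<forall>j<k. x j \<in> E) \<longrightarrow> norm (A x) \<le> C * (\<Prod>j<k. norm (x j)))"

definition bounded_multilinear_on :: "'a::real_normed_vector set \<Rightarrow> nat \<Rightarrow> ((nat \<Rightarrow> 'a) \<Rightarrow> 'b::real_normed_vector) \<Rightarrow> bool" where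
  "bounded_multilinear_on E k A \<longleftrightarrow> multilinear_on E k A \<and> (\<exists>C. mbounded_by E k A C)"

definition mnorm :: "'a::real_normed_vector set \<Rightarrow> nat \<Rightarrow> ((nat \<Rightarrow> 'a) \<Rightarrow> 'b::real_normed_vector) \<Rightarrow> real" where
  "mnorm E k A = Inf {C. C \<ge> 0 \<and> mbounded_by E k A C}"

text \<open>Analyticity on a set S contained in a closed subspace E (which is regarded as the
  Banach space of definition): locally f is given by a norm-convergent power series of
  continuous multilinear maps on E.\<close>
definition analytic_on_within :: "'a::real_normed_vector set \<Rightarrow> 'a set \<Rightarrow> ('a \<Rightarrow> 'b::real_normed_vector) \<Rightarrow> bool" where
  "analytic_on_within E S f \<longleftrightarrow>
     (\<forall>x0\<in>S. \<exists>r>0. \<exists>A :: nat \<Rightarrow> (nat \<Rightarrow> 'a) \<Rightarrow> 'b.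
        (\<forall>k. bounded_multilinear_on E k (A k)) \<and>
        summable (\<lambda>k. mnorm E k (A k) * r ^ k) \<and>
        (\<forall>h\<in>E. norm h < r \<longrightarrow> x0 + h \<in> S \<and> f (x0 + h) = (\<Sum>k. A k (\<lambda>_. h))))"

abbreviation banach_analytic_on :: "'a::real_normed_vector set \<Rightarrow> ('a \<Rightarrow> 'b::real_normed_vector) \<Rightarrow> bool" where
  "banach_analytic_on S f \<equiv> analytic_on_within UNIV S f"

definition tangent_space :: "'a::real_normed_vector set \<Rightarrow> 'a set \<Rightarrow> 'a \<Rightarrow> 'a set" where
  "tangent_space M Om u = {v. \<exists>\<epsilon>>0. \<exists>\<gamma> \<gamma>'.
      (\<forall>t\<in>{-\<epsilon><..<\<epsilon>}. (\<gamma> has_vector_derivative \<gamma>' t) (at t)) \<and>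
      continuous_on {-\<epsilon><..<\<epsilon>} \<gamma>' \<and>
      (\<forall>t\<in>{-\<epsilon><..<\<epsilon>}. \<gamma> t \<in> M \<inter> Om) \<and> \<gamma> 0 = u \<and> \<gamma>' 0 = v}"

definition has_codim :: "'a::real_vector set \<Rightarrow> nat \<Rightarrow> bool" where
  "has_codim S n \<longleftrightarrow> (\<exists>B. finite B \<and> card B = n \<and> independent B \<and>
      span B \<inter> S = {0} \<and> {x + y | x y. x \<in> S \<and> y \<in> span B} = UNIV)"

end

theory Submission
  imports Defs "HOL-Analysis.Analysis"
begin
lemma mnorm_props:
  assumes "bounded_multilinear_on E k A"
  shows "mnorm E k A \<ge> 0"
    and "\<And>x. (\<forall>j<k. x j \<in> E) \<Longrightarrow> norm (A x) \<le> mnorm E k A * (\<Prod>j<k. norm (x j))"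
proof -
  obtain C where C: "mbounded_by E k A C"
    using assms unfolding bounded_multilinear_on_def by blast
  define S where "S = {C. C \<ge> 0 \<and> mbounded_by E k A C}"
  have "max C 0 \<in> S"
  proof -
    have "mbounded_by E k A (max C 0)"
      unfolding mbounded_by_def
    proof (intro allI impI)
      fix x assume "\<forall>j<k. x j \<in> E"
      then have "norm (A x) \<le> C * (\<Prod>j<k. norm (x j))" using C unfolding mbounded_by_def by blast
      also have "\<dots> \<le> max C 0 * (\<Prod>j<k. norm (x j))"
        by (intro mult_right_mono) (auto simp: prod_nonneg)
      finally show "norm (A x) \<le> max C 0 * (\<Prod>j<k. norm (x j))" .
    qed
    then show ?thesis unfolding S_def by auto
  qed
  then have ne: "S \<noteq> {}" by blast
  have m: "mnorm E k A = Inf S" unfolding mnorm_def S_def by simp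
  have mn0: "mnorm E k A \<ge> 0" unfolding m using ne by (intro cInf_greatest) (auto simp: S_def)
  then show "mnorm E k A \<ge> 0" .
  fix x assume x: "\<forall>j<k. x j \<in> E"
  define P where "P = (\<Prod>j<k. norm (x j))"
  have P0: "P \<ge> 0" unfolding P_def by (auto simp: prod_nonneg)
  show "norm (A x) \<le> mnorm E k A * (\<Prod>j<k. norm (x j))"
  proof (cases "P = 0")
    case True
    have "norm (A x) \<le> C * P" using C x unfolding mbounded_by_def P_def by blast
    then show ?thesis using True mn0 unfolding P_def by (auto intro!: mult_nonneg_nonneg prod_nonneg)
  next
    case False
    then have Pp: "P > 0" using P0 by simp
    have "norm (A x) / P \<le> Inf S"
    proof (rule cInf_greatest[OF ne])
      fix D assume "D \<in> S"
      then have "norm (A x) \<le> D * P" using x unfolding S_def mbounded_by_def P_def by blast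
      then show "norm (A x) / P \<le> D" using Pp by (simp add: divide_le_eq)
    qed
    then show ?thesis using Pp unfolding m P_def[symmetric] by (simp add: divide_le_eq mult.commute)
  qed
qed

lemma multilinear_hom:
  assumes E: "subspace E" and A: "multilinear_on E k A" and h: "h \<in> E"
  shows "A (\<lambda>_. t *\<^sub>R h) = t ^ k *\<^sub>R A (\<lambda>_. h)"
proof -
  have A_ext: "\<And>x y. (\<forall>j<k. x j = y j) \<Longrightarrow> A x = A y"
  proof -
    have "\<forall>x y. (\<forall>j<k. x j = y j) \<longrightarrow> A x = A y"
      using A unfolding multilinear_on_def by (elim conjE)
    then show "\<And>x y. (\<forall>j<k. x j = y j) \<Longrightarrow> A x = A y" by blast
  qed
  have L: "\<forall>i<k. \<forall>x. (\<forall>j<k. x j \<in> E) \<longrightarrow>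
        (\<forall>a\<in>E. \<forall>b\<in>E. \<forall>c::real. A (x(i := c *\<^sub>R a + b)) = c *\<^sub>R A (x(i := a)) + A (x(i := b)))"
    using A unfolding multilinear_on_def by (elim conjE)
  have lin: "A (x(i := c *\<^sub>R a + b)) = c *\<^sub>R A (x(i := a)) + A (x(i := b))"
    if "i < k" "\<forall>j<k. x j \<in> E" "a \<in> E" "b \<in> E" for i x a b c
    using L that by simp
  have E0: "0 \<in> E" using E by (rule subspace_0)
  have zero: "A (x(i := 0)) = 0" if "i < k" "\<forall>j<k. x j \<in> E" for i x
  proof -
    have "A (x(i := 1 *\<^sub>R 0 + 0)) = 1 *\<^sub>R A (x(i := 0)) + A (x(i := 0))"
      by (rule lin[OF that E0 E0])
    then show ?thesis by simp
  qed
  have step: "A (x(i := t *\<^sub>R h)) = t *\<^sub>R A (x(i := h))" if "i < k" "\<forall>j<k. x j \<in> E" for i x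
  proof -
    have "A (x(i := t *\<^sub>R h + 0)) = t *\<^sub>R A (x(i := h)) + A (x(i := 0))"
      by (rule lin[OF that h E0])
    then show ?thesis using zero[OF that] by simp
  qed
  define y where "y i = (\<lambda>j. if j < i then t *\<^sub>R h else h)" for i :: nat
  have th: "t *\<^sub>R h \<in> E" using E h by (rule subspace_scale)
  have yE: "y i j \<in> E" for i j using h th by (simp add: y_def)
  have ind: "i \<le> k \<Longrightarrow> A (y i) = t ^ i *\<^sub>R A (y 0)" for i
  proof (induction i)
    case 0 then show ?case by simp
  next
    case (Suc i)
    have e1: "y (Suc i) = (y i)(i := t *\<^sub>R h)" by (rule ext) (simp add: y_def)
    have e2: "(y i)(i := h) = y i" by (rule ext) (simp add: y_def)
    have "i < k" using Suc.prems by simp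
    then have "A ((y i)(i := t *\<^sub>R h)) = t *\<^sub>R A ((y i)(i := h))"
      using yE by (intro step) auto
    then have "A (y (Suc i)) = t *\<^sub>R A (y i)" unfolding e1 e2 .
    then show ?case using Suc by simp
  qed
  have "A (y k) = t ^ k *\<^sub>R A (y 0)" using ind[of k] by simp
  moreover have "A (\<lambda>_. t *\<^sub>R h) = A (y k)" by (rule A_ext) (simp add: y_def)
  moreover have "y 0 = (\<lambda>_. h)" by (simp add: y_def)
  ultimately show ?thesis by simp
qed

lemma ps_deriv:
  fixes c :: "nat \<Rightarrow> 'v::banach" and R :: real
  assumes R: "R > 0" and sm: "summable (\<lambda>n. norm (c n) * R ^ n)"
  shows "\<forall>t\<in>{-R/2<..<R/2}. ((\<lambda>t. \<Sum>n. t ^ n *\<^sub>R c n) has_vector_derivative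
              (\<Sum>n. (real n * t ^ (n - 1)) *\<^sub>R c n)) (at t)"
    and "continuous_on {-R/2<..<R/2} (\<lambda>t. \<Sum>n. (real n * t ^ (n - 1)) *\<^sub>R c n)"
proof -
  define S where "S = {-R/2..R/2}"
  define M where "M n = 2 / R * (norm (c n) * R ^ n)" for n
  define d where "d n t = (real n * t ^ (n - 1)) *\<^sub>R c n" for n and t :: real
  define g' where "g' t = (\<Sum>n. d n t)" for t
  have smM: "summable M" unfolding M_def using sm by (rule summable_mult)
  have key: "real n * (R/2) ^ (n - 1) \<le> 2 / R * R ^ n" for n
  proof (cases n)
    case 0 then show ?thesis using R by simp
  next
    case (Suc m)
    have "real (Suc m) \<le> 2 ^ Suc m"
      by (metis less_exp less_imp_le of_nat_le_iff of_nat_numeral of_nat_power)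
    then have "real (Suc m) / 2 ^ m \<le> 2" by (simp add: divide_le_eq)
    then have "real (Suc m) / 2 ^ m * R ^ m \<le> 2 * R ^ m" using R by (intro mult_right_mono) auto
    moreover have "2 / R * R ^ Suc m = 2 * R ^ m" using R by simp
    moreover have "real (Suc m) * (R/2) ^ m = real (Suc m) / 2 ^ m * R ^ m" by (simp add: power_divide)
    ultimately show ?thesis using Suc by simp
  qed
  have bound: "norm (d n t) \<le> M n" if "t \<in> S" for n t
  proof -
    have "\<bar>t\<bar> \<le> R/2" using that by (auto simp: S_def)
    then have "\<bar>t\<bar> ^ (n - 1) \<le> (R/2) ^ (n - 1)" by (intro power_mono) auto
    then have "real n * \<bar>t\<bar> ^ (n - 1) \<le> real n * (R/2) ^ (n - 1)" by (intro mult_left_mono) auto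
    also have "\<dots> \<le> 2 / R * R ^ n" by (rule key)
    finally have "real n * \<bar>t\<bar> ^ (n - 1) * norm (c n) \<le> 2 / R * R ^ n * norm (c n)"
      by (intro mult_right_mono) auto
    then show ?thesis by (simp add: d_def M_def power_abs abs_mult mult_ac)
  qed
  have ul: "uniform_limit S (\<lambda>n x. \<Sum>i<n. d i x) g' sequentially"
    unfolding g'_def by (rule Weierstrass_m_test[OF bound smM])
  have fd: "((\<lambda>t. t ^ n *\<^sub>R c n) has_derivative (\<lambda>h. (real n * x ^ (n - 1) * h) *\<^sub>R c n)) (at x within S)"
    for n x
  proof -
    have "((\<lambda>t. t ^ n) has_derivative (\<lambda>h. real n * x ^ (n - Suc 0) * h)) (at x within S)"
      using DERIV_pow[of n x S] by (simp add: has_field_derivative_def)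
    then show ?thesis using has_derivative_scaleR_left by fastforce
  qed
  have unif: "\<forall>\<^sub>F n in sequentially. \<forall>x\<in>S. \<forall>h. norm ((\<Sum>i<n. (real i * x ^ (i - 1) * h) *\<^sub>R c i) - h *\<^sub>R g' x) \<le> e * norm h"
    if e: "e > 0" for e
  proof -
    have "\<forall>\<^sub>F n in sequentially. \<forall>x\<in>S. dist (\<Sum>i<n. d i x) (g' x) < e"
      using ul e unfolding uniform_limit_iff by blast
    then show ?thesis
    proof (rule eventually_mono)
      fix n assume H: "\<forall>x\<in>S. dist (\<Sum>i<n. d i x) (g' x) < e"
      show "\<forall>x\<in>S. \<forall>h. norm ((\<Sum>i<n. (real i * x ^ (i - 1) * h) *\<^sub>R c i) - h *\<^sub>R g' x) \<le> e * norm h"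
      proof (intro ballI allI)
        fix x h assume x: "x \<in> S"
        have eq: "(\<Sum>i<n. (real i * x ^ (i - 1) * h) *\<^sub>R c i) - h *\<^sub>R g' x = h *\<^sub>R ((\<Sum>i<n. d i x) - g' x)"
          by (simp add: d_def scaleR_sum_right scaleR_diff_right mult.commute)
        have "norm ((\<Sum>i<n. d i x) - g' x) \<le> e" using H x by (simp add: dist_norm less_imp_le)
        then show "norm ((\<Sum>i<n. (real i * x ^ (i - 1) * h) *\<^sub>R c i) - h *\<^sub>R g' x) \<le> e * norm h"
          unfolding eq by (simp add: mult.commute[of "\<bar>h\<bar>"] mult_right_mono)
      qed
    qed
  qed
  have S0: "0 \<in> S" using R by (simp add: S_def)
  have s0: "(\<lambda>n. (0::real) ^ n *\<^sub>R c n) sums c 0"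
  proof -
    have "(\<lambda>n. (0::real) ^ n *\<^sub>R c n) = (\<lambda>n. if n = 0 then c n else 0)" by (auto simp: fun_eq_iff)
    then show ?thesis using sums_single[of 0 c] by simp
  qed
  have cvx: "convex S" by (simp add: S_def)
  obtain G where G: "\<And>x. x \<in> S \<Longrightarrow> (\<lambda>n. x ^ n *\<^sub>R c n) sums G x"
    "\<And>x. x \<in> S \<Longrightarrow> (G has_derivative (\<lambda>h. h *\<^sub>R g' x)) (at x within S)"
    using has_derivative_series[where f="\<lambda>n t. t ^ n *\<^sub>R c n" and f'="\<lambda>n x h. (real n * x ^ (n - 1) * h) *\<^sub>R c n"
        and g'="\<lambda>x h. h *\<^sub>R g' x", OF cvx fd unif S0 s0] by blast
  show "\<forall>t\<in>{-R/2<..<R/2}. ((\<lambda>t. \<Sum>n. t ^ n *\<^sub>R c n) has_vector_derivative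
              (\<Sum>n. (real n * t ^ (n - 1)) *\<^sub>R c n)) (at t)"
  proof
    fix t assume t: "t \<in> {-R/2<..<R/2}"
    then have tS: "t \<in> S" by (auto simp: S_def)
    have "interior S = {-R/2<..<R/2}" by (simp add: S_def)
    then have "(G has_derivative (\<lambda>h. h *\<^sub>R g' t)) (at t)"
      using G(2)[OF tS] t at_within_interior[of t S] by simp
    then have "((\<lambda>t. \<Sum>n. t ^ n *\<^sub>R c n) has_derivative (\<lambda>h. h *\<^sub>R g' t)) (at t)"
    proof (rule has_derivative_transform_within_open[where s="{-R/2<..<R/2}"])
      show "open {-R/2<..<R/2}" by simp
      show "t \<in> {-R/2<..<R/2}" by fact
      fix x :: real assume "x \<in> {-R/2<..<R/2}"
      then have "x \<in> S" by (auto simp: S_def)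
      then show "G x = (\<Sum>n. x ^ n *\<^sub>R c n)" using G(1) sums_unique by metis
    qed
    then show "((\<lambda>t. \<Sum>n. t ^ n *\<^sub>R c n) has_vector_derivative (\<Sum>n. (real n * t ^ (n - 1)) *\<^sub>R c n)) (at t)"
      by (simp add: has_vector_derivative_def g'_def d_def)
  qed
  have "continuous_on S g'"
  proof (rule uniform_limit_theorem[OF _ ul])
    show "\<forall>\<^sub>F n in sequentially. continuous_on S (\<lambda>x. \<Sum>i<n. d i x)"
      by (intro always_eventually allI continuous_intros) (simp add: d_def continuous_intros)
  qed simp
  then have "continuous_on S (\<lambda>t. \<Sum>n. (real n * t ^ (n - 1)) *\<^sub>R c n)"
    by (simp add: g'_def d_def)
  then show "continuous_on {-R/2<..<R/2} (\<lambda>t. \<Sum>n. (real n * t ^ (n - 1)) *\<^sub>R c n)"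
    by (rule continuous_on_subset) (auto simp: S_def)
qed

lemma multilinear_ext:
  assumes "multilinear_on E k A" "\<forall>j<k. x j = y j"
  shows "A x = A y"
proof -
  have "\<forall>x y. (\<forall>j<k. x j = y j) \<longrightarrow> A x = A y"
    using assms(1) unfolding multilinear_on_def by (elim conjE)
  then show ?thesis using assms(2) by blast
qed

lemma multilinear_lin:
  assumes "multilinear_on E k A" "i < k" "\<forall>j<k. x j \<in> E" "a \<in> E" "b \<in> E"
  shows "A (x(i := c *\<^sub>R a + b)) = c *\<^sub>R A (x(i := a)) + A (x(i := b))"
proof -
  have L: "\<forall>i<k. \<forall>x. (\<forall>j<k. x j \<in> E) \<longrightarrow>
        (\<forall>a\<in>E. \<forall>b\<in>E. \<forall>c::real. A (x(i := c *\<^sub>R a + b)) = c *\<^sub>R A (x(i := a)) + A (x(i := b)))"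
    using assms(1) unfolding multilinear_on_def by (elim conjE)
  then show ?thesis using assms(2-) by simp
qed

lemma quad_deriv:
  assumes D: "bounded_linear D" and r: "r > 0"
    and q: "\<forall>y\<in>s. norm (y - x) < r \<longrightarrow> norm (f y - f x - D (y - x)) \<le> C * norm (y - x) ^ 2"
  shows "(f has_derivative D) (at x within s)"
  unfolding has_derivative_within_alt
proof (intro conjI D allI impI)
  fix e :: real assume e: "e > 0"
  define d where "d = min r (e / (\<bar>C\<bar> + 1))"
  have d: "d > 0" using r e by (simp add: d_def)
  show "\<exists>d>0. \<forall>y\<in>s. norm (y - x) < d \<longrightarrow> norm (f y - f x - D (y - x)) \<le> e * norm (y - x)"
  proof (intro exI[of _ d] conjI d ballI impI)
    fix y assume y: "y \<in> s" and yd: "norm (y - x) < d"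
    let ?n = "norm (y - x)"
    have "?n < e / (\<bar>C\<bar> + 1)" using yd by (simp add: d_def)
    then have "?n * (\<bar>C\<bar> + 1) \<le> e" by (simp add: pos_less_divide_eq less_imp_le)
    then have "\<bar>C\<bar> * ?n \<le> e" by (smt (verit, best) mult_nonneg_nonneg norm_ge_zero distrib_left mult.commute mult_cancel_left1)
    then have "\<bar>C\<bar> * ?n * ?n \<le> e * ?n" by (intro mult_right_mono) auto
    moreover have "C * ?n ^ 2 \<le> \<bar>C\<bar> * ?n * ?n" using mult_right_mono[of C "\<bar>C\<bar>" "?n * ?n"] by (simp add: power2_eq_square mult.assoc)
    moreover have "norm (f y - f x - D (y - x)) \<le> C * ?n ^ 2" using q y yd by (simp add: d_def)
    ultimately show "norm (f y - f x - D (y - x)) \<le> e * ?n" by linarith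
  qed
qed

lemma an_facts:
  fixes A :: "nat \<Rightarrow> (nat \<Rightarrow> 'a::real_normed_vector) \<Rightarrow> 'b::banach"
  assumes E: "subspace E" and r: "r > 0"
    and A: "\<forall>k. bounded_multilinear_on E k (A k)"
    and sm: "summable (\<lambda>k. mnorm E k (A k) * r ^ k)"
    and f: "\<forall>h\<in>E. norm h < r \<longrightarrow> f (x0 + h) = (\<Sum>k. A k (\<lambda>_. h))"
  shows "\<exists>C. \<forall>h\<in>E. norm h < r \<longrightarrow> norm (f (x0 + h) - f x0 - A 1 (\<lambda>_. h)) \<le> C * norm h ^ 2"
    and "\<forall>a\<in>E. \<forall>b\<in>E. \<forall>c. A 1 (\<lambda>_. c *\<^sub>R a + b) = c *\<^sub>R A 1 (\<lambda>_. a) + A 1 (\<lambda>_. b)"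
    and "\<forall>h\<in>E. norm (A 1 (\<lambda>_. h)) \<le> mnorm E 1 (A 1) * norm h"
proof -
  define m where "m k = mnorm E k (A k)" for k
  have ml: "multilinear_on E k (A k)" for k using A unfolding bounded_multilinear_on_def by blast
  have m0: "m k \<ge> 0" for k using mnorm_props(1)[of E k "A k"] A by (simp add: m_def)
  have bnd: "norm (A k (\<lambda>_. h)) \<le> m k * norm h ^ k" if "h \<in> E" for k h
    using mnorm_props(2)[of E k "A k" "\<lambda>_. h"] A that by (simp add: m_def)
  have E0: "0 \<in> E" using E by (rule subspace_0)
  show "\<forall>h\<in>E. norm (A 1 (\<lambda>_. h)) \<le> mnorm E 1 (A 1) * norm h"
    using bnd[of _ 1] by (simp add: m_def)
  show "\<forall>a\<in>E. \<forall>b\<in>E. \<forall>c. A 1 (\<lambda>_. c *\<^sub>R a + b) = c *\<^sub>R A 1 (\<lambda>_. a) + A 1 (\<lambda>_. b)"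
  proof (intro ballI allI)
    fix a b c assume a: "a \<in> E" and b: "b \<in> E"
    let ?x = "\<lambda>_::nat. a"
    have "A 1 (?x(0 := c *\<^sub>R a + b)) = c *\<^sub>R A 1 (?x(0 := a)) + A 1 (?x(0 := b))"
      using multilinear_lin[OF ml[of 1], of 0 ?x a b c] a b by simp
    moreover have "A 1 (?x(0 := y)) = A 1 (\<lambda>_. y)" for y
      by (rule multilinear_ext[OF ml[of 1]]) simp
    ultimately show "A 1 (\<lambda>_. c *\<^sub>R a + b) = c *\<^sub>R A 1 (\<lambda>_. a) + A 1 (\<lambda>_. b)" by simp
  qed
  have smh: "summable (\<lambda>k. A k (\<lambda>_. h))" if "h \<in> E" "norm h < r" for h
  proof (rule summable_comparison_test'[OF sm])
    fix k :: nat
    have "norm h ^ k \<le> r ^ k" using that by (intro power_mono) auto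
    then have "m k * norm h ^ k \<le> m k * r ^ k" using m0 by (intro mult_left_mono) auto
    then show "norm (A k (\<lambda>_. h)) \<le> mnorm E k (A k) * r ^ k" using bnd[OF that(1), of k] unfolding m_def by linarith
  qed
  have z: "A k (\<lambda>_. 0) = 0" if "k \<noteq> 0" for k
  proof -
    have "A k (\<lambda>_. 0) = A k (\<lambda>_. (0::real) *\<^sub>R 0)" by simp
    also have "\<dots> = 0 ^ k *\<^sub>R A k (\<lambda>_. 0)" by (rule multilinear_hom[OF E ml[of k] E0])
    also have "\<dots> = 0" using that by simp
    finally show ?thesis .
  qed
  have fx0: "f x0 = A 0 (\<lambda>_. 0)"
  proof -
    have "f (x0 + 0) = (\<Sum>k. A k (\<lambda>_. 0))" using f E0 r norm_zero by metis
    also have "(\<lambda>k. A k (\<lambda>_. 0)) = (\<lambda>k. if k = 0 then A k (\<lambda>_. 0) else 0)"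
      using z by (auto simp: fun_eq_iff)
    also have "suminf \<dots> = A 0 (\<lambda>_. 0)" using sums_single[of 0 "\<lambda>k. A k (\<lambda>_. 0)"] sums_unique by metis
    finally show ?thesis by simp
  qed
  have smr2: "summable (\<lambda>k. m (k + 2) * r ^ k)"
  proof -
    have "summable (\<lambda>k. m (k + 2) * r ^ (k + 2))"
      using summable_ignore_initial_segment[OF sm, of 2] by (simp add: m_def)
    then have "summable (\<lambda>k. m (k + 2) * r ^ (k + 2) / r ^ 2)" by (rule summable_divide)
    moreover have "(\<lambda>k. m (k + 2) * r ^ (k + 2) / r ^ 2) = (\<lambda>k. m (k + 2) * r ^ k)"
      using r by (simp add: fun_eq_iff power_add power2_eq_square)
    ultimately show ?thesis by (simp only:)
  qed
  show "\<exists>C. \<forall>h\<in>E. norm h < r \<longrightarrow> norm (f (x0 + h) - f x0 - A 1 (\<lambda>_. h)) \<le> C * norm h ^ 2"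
  proof (intro exI ballI impI)
    fix h assume h: "h \<in> E" and hr: "norm h < r"
    have A0: "A 0 (\<lambda>_. h) = A 0 (\<lambda>_. 0)" by (rule multilinear_ext[OF ml[of 0]]) simp
    have "f (x0 + h) = (\<Sum>k. A (k + 2) (\<lambda>_. h)) + (\<Sum>i<2. A i (\<lambda>_. h))"
      using f h hr suminf_split_initial_segment[OF smh[OF h hr], of 2] by simp
    also have "(\<Sum>i<2. A i (\<lambda>_. h)) = A 0 (\<lambda>_. h) + A 1 (\<lambda>_. h)"
      by (simp add: eval_nat_numeral)
    finally have eq: "f (x0 + h) - f x0 - A 1 (\<lambda>_. h) = (\<Sum>k. A (k + 2) (\<lambda>_. h))"
      using fx0 A0 by simp
    have tb: "norm (A (k + 2) (\<lambda>_. h)) \<le> norm h ^ 2 * (m (k + 2) * r ^ k)" for k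
    proof -
      have "norm h ^ k \<le> r ^ k" using hr by (intro power_mono) auto
      then have "m (k + 2) * norm h ^ k \<le> m (k + 2) * r ^ k" using m0 by (intro mult_left_mono) auto
      then have "norm h ^ 2 * (m (k + 2) * norm h ^ k) \<le> norm h ^ 2 * (m (k + 2) * r ^ k)"
        by (rule mult_left_mono) auto
      moreover have "norm h ^ 2 * (m (k + 2) * norm h ^ k) = m (k + 2) * norm h ^ (k + 2)"
        by (simp only: power_add mult_ac)
      ultimately show ?thesis using bnd[OF h, of "k + 2"] by linarith
    qed
    have sm2: "summable (\<lambda>k. norm h ^ 2 * (m (k + 2) * r ^ k))" using smr2 by (rule summable_mult)
    have smn: "summable (\<lambda>k. norm (A (k + 2) (\<lambda>_. h)))"
      by (rule summable_comparison_test'[OF sm2]) (use tb in simp)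
    have "norm (\<Sum>k. A (k + 2) (\<lambda>_. h)) \<le> (\<Sum>k. norm (A (k + 2) (\<lambda>_. h)))"
      by (rule summable_norm[OF smn])
    also have "\<dots> \<le> (\<Sum>k. norm h ^ 2 * (m (k + 2) * r ^ k))"
      by (rule suminf_le[OF tb smn sm2])
    also have "\<dots> = (\<Sum>k. m (k + 2) * r ^ k) * norm h ^ 2"
      using suminf_mult[OF smr2, of "norm h ^ 2"] by simp
    finally show "norm (f (x0 + h) - f x0 - A 1 (\<lambda>_. h)) \<le> (\<Sum>k. m (k + 2) * r ^ k) * norm h ^ 2"
      unfolding eq .
  qed
qed

lemma lin_on_facts:
  fixes D :: "'a::real_vector \<Rightarrow> 'b::real_vector"
  assumes E: "subspace E"
    and L: "\<forall>a\<in>E. \<forall>b\<in>E. \<forall>c. D (c *\<^sub>R a + b) = c *\<^sub>R D a + D b"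
  shows "D 0 = 0" and "\<And>a b. a \<in> E \<Longrightarrow> b \<in> E \<Longrightarrow> D (a + b) = D a + D b"
    and "\<And>a c. a \<in> E \<Longrightarrow> D (c *\<^sub>R a) = c *\<^sub>R D a"
proof -
  have E0: "0 \<in> E" using E by (rule subspace_0)
  have "D ((-1) *\<^sub>R 0 + 0) = (-1) *\<^sub>R D 0 + D 0" by (rule L[rule_format, OF E0 E0])
  then show D0: "D 0 = 0" by simp
  show "\<And>a b. a \<in> E \<Longrightarrow> b \<in> E \<Longrightarrow> D (a + b) = D a + D b"
  proof -
    fix a b assume "a \<in> E" "b \<in> E"
    then have "D (1 *\<^sub>R a + b) = 1 *\<^sub>R D a + D b" by (intro L[rule_format])
    then show "D (a + b) = D a + D b" by simp
  qed
  show "\<And>a c. a \<in> E \<Longrightarrow> D (c *\<^sub>R a) = c *\<^sub>R D a"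
  proof -
    fix a c assume "a \<in> E"
    then have "D (c *\<^sub>R a + 0) = c *\<^sub>R D a + D 0" using E0 by (intro L[rule_format])
    then show "D (c *\<^sub>R a) = c *\<^sub>R D a" using D0 by simp
  qed
qed

lemma an_diff_within:
  fixes f :: "'a::real_normed_vector \<Rightarrow> 'b::banach"
  assumes an: "analytic_on_within E S f" and E: "subspace E" and SE: "S \<subseteq> E" and x: "x \<in> S"
    and P: "bounded_linear P" and PE: "\<forall>v. P v \<in> E" and Pid: "\<forall>v\<in>E. P v = v"
  shows "f differentiable (at x within S)"
proof -
  obtain r A where r: "r > 0" and A: "\<forall>k. bounded_multilinear_on E k (A k)"
    and sm: "summable (\<lambda>k. mnorm E k (A k) * r ^ k)"
    and fe: "\<forall>h\<in>E. norm h < r \<longrightarrow> x + h \<in> S \<and> f (x + h) = (\<Sum>k. A k (\<lambda>_. h))"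
    using bspec[OF an[unfolded analytic_on_within_def] x] by blast
  have fe': "\<forall>h\<in>E. norm h < r \<longrightarrow> f (x + h) = (\<Sum>k. A k (\<lambda>_. h))" using fe by blast
  note F = an_facts[OF E r A sm fe']
  obtain C where C: "\<forall>h\<in>E. norm h < r \<longrightarrow> norm (f (x + h) - f x - A 1 (\<lambda>_. h)) \<le> C * norm h ^ 2"
    using F(1) by blast
  define D1 where "D1 h = A 1 (\<lambda>_. h)" for h
  have L: "\<forall>a\<in>E. \<forall>b\<in>E. \<forall>c. D1 (c *\<^sub>R a + b) = c *\<^sub>R D1 a + D1 b" using F(2) by (simp add: D1_def)
  note LF = lin_on_facts[OF E L]
  obtain K where K: "\<And>v. norm (P v) \<le> norm v * K" using P bounded_linear.bounded by blast
  define D where "D v = D1 (P v)" for v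
  have bl: "bounded_linear D"
  proof (rule bounded_linear_intro)
    fix u v show "D (u + v) = D u + D v"
      unfolding D_def using LF(2)[of "P u" "P v"] PE linear_add[OF bounded_linear.linear[OF P]] by simp
  next
    fix c u show "D (c *\<^sub>R u) = c *\<^sub>R D u"
      unfolding D_def using LF(3)[of "P u" c] PE linear_scale[OF bounded_linear.linear[OF P]] by simp
  next
    fix u
    have "norm (D u) \<le> mnorm E 1 (A 1) * norm (P u)" using F(3) PE by (simp add: D_def D1_def)
    also have "\<dots> \<le> mnorm E 1 (A 1) * (norm u * K)"
      using K mnorm_props(1)[of E 1 "A 1"] A by (intro mult_left_mono) auto
    finally show "norm (D u) \<le> norm u * (mnorm E 1 (A 1) * K)" by (simp add: mult_ac)
  qed
  have "(f has_derivative D) (at x within S)"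
  proof (rule quad_deriv[OF bl r])
    show "\<forall>y\<in>S. norm (y - x) < r \<longrightarrow> norm (f y - f x - D (y - x)) \<le> C * norm (y - x) ^ 2"
    proof (intro ballI impI)
      fix y assume y: "y \<in> S" and yr: "norm (y - x) < r"
      have h: "y - x \<in> E" using SE y x E by (auto intro: subspace_diff)
      have "D (y - x) = A 1 (\<lambda>_. y - x)" using Pid h by (simp add: D_def D1_def)
      then show "norm (f y - f x - D (y - x)) \<le> C * norm (y - x) ^ 2"
        using C h yr by (metis add.commute diff_add_cancel)
    qed
  qed
  then show ?thesis unfolding differentiable_def by blast
qed

lemma an_diff_UNIV:
  fixes f :: "'a::real_normed_vector \<Rightarrow> 'b::banach"
  assumes an: "banach_analytic_on U f" and x: "x \<in> U"
  shows "f differentiable (at x)"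
proof -
  have U: "U \<subseteq> UNIV" by simp
  have "f differentiable (at x within U)"
    by (rule an_diff_within[OF an subspace_UNIV U x bounded_linear_ident]) auto
  moreover have "open U"
  proof (rule openI)
    fix y assume "y \<in> U"
    then obtain r where r: "r > 0" and "\<forall>h. norm h < r \<longrightarrow> y + h \<in> U"
      using bspec[OF an[unfolded analytic_on_within_def], of y] by auto
    then have "ball y r \<subseteq> U"
      by (auto simp: dist_norm) (metis add.commute diff_add_cancel norm_minus_commute)
    then show "\<exists>e>0. ball y e \<subseteq> U" using r by blast
  qed
  ultimately show ?thesis using x at_within_open by metis
qed

lemma an_line:
  fixes f :: "'a::real_normed_vector \<Rightarrow> 'b::banach"
  assumes an: "analytic_on_within E S f" and E: "subspace E" and x: "x \<in> S" and a: "a \<in> E"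
  shows "\<exists>\<epsilon>>0. \<exists>g'. (\<forall>t\<in>{-\<epsilon><..<\<epsilon>}. x + t *\<^sub>R a \<in> S \<and>
            ((\<lambda>t. f (x + t *\<^sub>R a)) has_vector_derivative g' t) (at t)) \<and> continuous_on {-\<epsilon><..<\<epsilon>} g'"
proof -
  obtain r A where r: "r > 0" and A: "\<forall>k. bounded_multilinear_on E k (A k)"
    and sm: "summable (\<lambda>k. mnorm E k (A k) * r ^ k)"
    and fe: "\<forall>h\<in>E. norm h < r \<longrightarrow> x + h \<in> S \<and> f (x + h) = (\<Sum>k. A k (\<lambda>_. h))"
    using bspec[OF an[unfolded analytic_on_within_def] x] by blast
  define R where "R = r / (norm a + 1)"
  have na: "norm a + 1 > 0" using norm_ge_zero[of a] by linarith
  have R: "R > 0" unfolding R_def using r na by (rule divide_pos_pos)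
  have Ra: "R * norm a < r"
  proof -
    have "R * norm a = r * (norm a / (norm a + 1))" by (simp add: R_def)
    also have "\<dots> < r * 1" using r na by (intro mult_strict_left_mono) (auto simp: divide_less_eq)
    finally show ?thesis by simp
  qed
  define c where "c k = A k (\<lambda>_. a)" for k
  have ml: "multilinear_on E k (A k)" for k using A unfolding bounded_multilinear_on_def by blast
  have smc: "summable (\<lambda>k. norm (c k) * R ^ k)"
  proof (rule summable_comparison_test'[OF sm])
    fix k :: nat
    have m0: "mnorm E k (A k) \<ge> 0" using mnorm_props(1)[of E k "A k"] A by simp
    have b: "norm (c k) \<le> mnorm E k (A k) * norm a ^ k"
      using mnorm_props(2)[of E k "A k" "\<lambda>_. a"] A a by (simp add: c_def)
    have "(norm a * R) ^ k \<le> r ^ k" using Ra R by (intro power_mono) (auto simp: mult.commute)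
    then have "mnorm E k (A k) * (norm a * R) ^ k \<le> mnorm E k (A k) * r ^ k"
      using m0 by (rule mult_left_mono)
    moreover have "norm (c k) * R ^ k \<le> mnorm E k (A k) * (norm a * R) ^ k"
      using mult_right_mono[OF b, of "R ^ k"] R by (simp add: power_mult_distrib mult_ac)
    ultimately have "norm (c k) * R ^ k \<le> mnorm E k (A k) * r ^ k" by linarith
    then show "norm (norm (c k) * R ^ k) \<le> mnorm E k (A k) * r ^ k" using R by simp
  qed
  note PS = ps_deriv[OF R smc]
  define g' where "g' t = (\<Sum>n. (real n * t ^ (n - 1)) *\<^sub>R c n)" for t
  have inS: "x + t *\<^sub>R a \<in> S \<and> f (x + t *\<^sub>R a) = (\<Sum>n. t ^ n *\<^sub>R c n)" if t: "\<bar>t\<bar> < R" for t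
  proof -
    have ta: "t *\<^sub>R a \<in> E" using E a by (rule subspace_scale)
    have "norm (t *\<^sub>R a) = \<bar>t\<bar> * norm a" by simp
    also have "\<dots> \<le> R * norm a" using t by (intro mult_right_mono) auto
    finally have "norm (t *\<^sub>R a) < r" using Ra by simp
    then have "x + t *\<^sub>R a \<in> S \<and> f (x + t *\<^sub>R a) = (\<Sum>k. A k (\<lambda>_. t *\<^sub>R a))" using fe ta by blast
    moreover have "A k (\<lambda>_. t *\<^sub>R a) = t ^ k *\<^sub>R c k" for k
      unfolding c_def by (rule multilinear_hom[OF E ml a])
    ultimately show ?thesis by simp
  qed
  show ?thesis
  proof (intro exI[of _ "R/2"] exI[of _ g'] conjI ballI)
    show "R / 2 > 0" using R by simp
    show "continuous_on {-(R/2)<..<R/2} g'" using PS(2) by (simp add: g'_def)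
  next
    fix t assume t: "t \<in> {-(R/2)<..<R/2}"
    then show "x + t *\<^sub>R a \<in> S" using inS[of t] by auto
    have "((\<lambda>t. \<Sum>n. t ^ n *\<^sub>R c n) has_vector_derivative g' t) (at t)"
      using PS(1) t by (simp add: g'_def)
    then show "((\<lambda>t. f (x + t *\<^sub>R a)) has_vector_derivative g' t) (at t)"
    proof (rule has_vector_derivative_transform_within_open[where S="{-(R/2)<..<R/2}"])
      show "open {-(R/2)<..<R/2}" by simp
      show "t \<in> {-(R/2)<..<R/2}" by fact
      fix y :: real assume "y \<in> {-(R/2)<..<R/2}"
      then have "\<bar>y\<bar> < R" by auto
      then show "(\<Sum>n. y ^ n *\<^sub>R c n) = f (x + y *\<^sub>R a)" using inS by simp
    qed
  qed
qed

lemma inv_on_subspace: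
  fixes T :: "'v::real_normed_vector \<Rightarrow> 'b::euclidean_space"
  assumes T: "linear T" and V1: "subspace V1" and bij: "bij_betw T V1 UNIV"
  shows "bounded_linear (inv_into V1 T)" "\<forall>y. inv_into V1 T y \<in> V1"
    "\<forall>y. T (inv_into V1 T y) = y" "\<forall>v\<in>V1. inv_into V1 T (T v) = v"
proof -
  define L where "L = inv_into V1 T"
  have inj: "inj_on T V1" and im: "T ` V1 = UNIV" using bij by (auto simp: bij_betw_def)
  have LV: "\<forall>y. L y \<in> V1" unfolding L_def using im inv_into_into[of _ T V1] by simp
  have TL: "\<forall>y. T (L y) = y" unfolding L_def using im f_inv_into_f[of _ T V1] by simp
  have LT: "\<forall>v\<in>V1. L (T v) = v" unfolding L_def using inj by (simp add: inv_into_f_f)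
  have uniq: "x = y" if "x \<in> V1" "y \<in> V1" "T x = T y" for x y by (rule inj_onD[OF inj that(3) that(1) that(2)])
  have "linear L"
  proof (rule linearI)
    fix x y show "L (x + y) = L x + L y"
      using LV TL V1 by (intro uniq) (auto simp: subspace_add linear_add[OF T])
  next
    fix c :: real and x show "L (c *\<^sub>R x) = c *\<^sub>R L x"
      using LV TL V1 by (intro uniq) (auto simp: subspace_scale linear_scale[OF T])
  qed
  then show "bounded_linear (inv_into V1 T)" unfolding L_def[symmetric] by (simp add: linear_conv_bounded_linear)
  show "\<forall>y. inv_into V1 T y \<in> V1" "\<forall>y. T (inv_into V1 T y) = y" "\<forall>v\<in>V1. inv_into V1 T (T v) = v"
    using LV TL LT by (simp_all add: L_def)
qed

lemma deriv_zero_curve: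
  assumes g: "(g has_vector_derivative v) (at 0)" and e: "\<epsilon> > 0"
    and z: "\<forall>t\<in>{-\<epsilon><..<\<epsilon>}. F (g t) = 0" and F: "(F has_derivative F') (at (g 0))"
  shows "F' v = 0"
proof -
  have gd: "(g has_derivative (\<lambda>h. h *\<^sub>R v)) (at 0)" using g by (simp add: has_vector_derivative_def)
  have c1: "((F \<circ> g) has_derivative (F' \<circ> (\<lambda>h. h *\<^sub>R v))) (at 0)"
    by (rule diff_chain_at[OF gd F])
  have "((\<lambda>t. 0) has_derivative (\<lambda>h. 0)) (at (0::real))" by (rule has_derivative_const)
  then have c2: "((F \<circ> g) has_derivative (\<lambda>h. 0)) (at 0)"
  proof (rule has_derivative_transform_within_open[where s="{-\<epsilon><..<\<epsilon>}"])
    show "open {-\<epsilon><..<\<epsilon>}" by simp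
    show "(0::real) \<in> {-\<epsilon><..<\<epsilon>}" using e by simp
    fix x assume "x \<in> {-\<epsilon><..<\<epsilon>}"
    then show "0 = (F \<circ> g) x" using z by simp
  qed
  have "(F' \<circ> (\<lambda>h. h *\<^sub>R v)) = (\<lambda>h. 0)" by (rule has_derivative_unique[OF c1 c2])
  then have "(F' \<circ> (\<lambda>h. h *\<^sub>R v)) 1 = 0" by simp
  then show ?thesis by simp
qed

lemma codim_part:
  fixes T :: "'v::real_vector \<Rightarrow> 'b::euclidean_space"
  assumes T: "linear T" and L: "linear L" and TL: "\<forall>y. T (L y) = y"
  shows "has_codim {v. T v = 0} DIM('b)"
  unfolding has_codim_def
proof (intro exI[of _ "L ` Basis"] conjI)
  have injL: "inj L" by (rule injI) (metis TL)
  show "finite (L ` Basis)" by simp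
  show "card (L ` Basis) = DIM('b)" using injL by (simp add: card_image inj_on_subset)
  show "independent (L ` Basis)"
    by (rule linear_independent_injective_image[OF L independent_Basis]) (use injL in \<open>simp add: inj_on_subset\<close>)
  have sp: "span (L ` Basis) = range L" using span_linear_image[OF L, of Basis] by simp
  show "span (L ` Basis) \<inter> {v. T v = 0} = {0}"
  proof
    show "span (L ` Basis) \<inter> {v. T v = 0} \<subseteq> {0}"
    proof
      fix x assume "x \<in> span (L ` Basis) \<inter> {v. T v = 0}"
      then obtain y where "x = L y" "T x = 0" using sp by auto
      then have "y = 0" using TL by simp
      then show "x \<in> {0}" using \<open>x = L y\<close> linear_0[OF L] by simp
    qed
    show "{0} \<subseteq> span (L ` Basis) \<inter> {v. T v = 0}" using linear_0[OF T] by (simp add: span_zero)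
  qed
  show "{x + y |x y. x \<in> {v. T v = 0} \<and> y \<in> span (L ` Basis)} = UNIV"
  proof (rule set_eqI, rule iffI)
    fix v :: 'v
    have "v = (v - L (T v)) + L (T v)" by simp
    moreover have "T (v - L (T v)) = 0" using TL linear_diff[OF T] by simp
    moreover have "L (T v) \<in> span (L ` Basis)" using sp by simp
    ultimately show "v \<in> {x + y |x y. x \<in> {v. T v = 0} \<and> y \<in> span (L ` Basis)}" by blast
  qed simp
qed

lemma closure_part:
  fixes J :: "'v::real_normed_vector \<Rightarrow> 'y::real_normed_vector" and T :: "'v \<Rightarrow> 'b::euclidean_space"
  assumes J: "bounded_linear J" and dense: "closure (range J) = UNIV"
    and BT: "\<forall>v. blinfun_apply B (J v) = T v" and T: "linear T"
    and L: "bounded_linear L" and TL: "\<forall>y. T (L y) = y"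
  shows "closure (J ` {v. T v = 0}) = {y. blinfun_apply B y = 0}"
proof
  have cl: "closed {y. blinfun_apply B y = 0}"
    by (rule closed_Collect_eq) (auto intro: continuous_intros)
  show "closure (J ` {v. T v = 0}) \<subseteq> {y. blinfun_apply B y = 0}"
    by (rule closure_minimal[OF _ cl]) (use BT in auto)
  show "{y. blinfun_apply B y = 0} \<subseteq> closure (J ` {v. T v = 0})"
  proof
    fix y assume y: "y \<in> {y. blinfun_apply B y = 0}"
    have "y \<in> closure (range J)" using dense by simp
    then obtain v where v: "\<And>n. v n \<in> range J" and lim: "v \<longlonglongrightarrow> y"
      unfolding closure_sequential by blast
    define w where "w n = inv_into UNIV J (v n)" for n
    have w: "v n = J (w n)" for n unfolding w_def using v[of n] by (rule f_inv_into_f[symmetric])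
    define Q where "Q z = J (L (blinfun_apply B z))" for z
    have Q: "bounded_linear Q" unfolding Q_def
      using J L by (intro bounded_linear_compose[OF J] bounded_linear_compose[OF L] blinfun.bounded_linear_right)
    have "(\<lambda>n. v n - Q (v n)) \<longlonglongrightarrow> y - Q y"
      by (intro tendsto_diff lim bounded_linear.tendsto[OF Q])
    moreover have "Q y = 0" using y linear_0[OF bounded_linear.linear[OF L]] linear_0[OF bounded_linear.linear[OF J]]
      by (simp add: Q_def)
    moreover have "v n - Q (v n) \<in> J ` {v. T v = 0}" for n
    proof
      show "v n - Q (v n) = J (w n - L (T (w n)))"
        using w BT linear_diff[OF bounded_linear.linear[OF J]] by (simp add: Q_def)
      show "w n - L (T (w n)) \<in> {v. T v = 0}" using TL linear_diff[OF T] by simp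
    qed
    ultimately show "y \<in> closure (J ` {v. T v = 0})" unfolding closure_sequential by force
  qed
qed

theorem proposition3p3:
  fixes J :: "'v::banach \<Rightarrow> 'y::banach"
    and U :: "'v set"
    and G :: "'v \<Rightarrow> real^'m"
    and Gb :: "'v \<Rightarrow> ('y \<Rightarrow>\<^sub>L (real^'m))"
    and ubar :: 'v
    and V1 \<Omega>0 \<Omega>1 :: "'v set"
    and \<psi> :: "'v \<Rightarrow> 'v"
  defines "M \<equiv> {u \<in> U. G u = 0}"
    and "V0 \<equiv> {v. frechet_derivative G (at ubar) v = 0}"
    and "\<Omega> \<equiv> {a + b | a b. a \<in> \<Omega>0 \<and> b \<in> \<Omega>1}"
    and "\<phi> \<equiv> (\<lambda>w. w + \<psi> w)"
  assumes J_bl: "bounded_linear J" and J_inj: "inj J" and J_dense: "closure (range J) = UNIV"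
    and U_open: "open U"
    and G_an: "banach_analytic_on U G"
    and Gb_ext: "\<forall>u\<in>U. \<forall>v. blinfun_apply (Gb u) (J v) = frechet_derivative G (at u) v"
    and Gb_an: "banach_analytic_on U Gb"
    and G_ubar: "ubar \<in> U" "G ubar = 0"
    and G'_surj: "surj (frechet_derivative G (at ubar))"
    and V1_sub: "subspace V1" and V1_closed: "closed V1"
    and dsum: "V0 \<inter> V1 = {0}" "{a + b | a b. a \<in> V0 \<and> b \<in> V1} = UNIV"
    and \<Omega>0_open: "openin (top_of_set V0) \<Omega>0" and \<Omega>0_sub: "\<Omega>0 \<subseteq> V0"
    and \<Omega>1_open: "openin (top_of_set V1) \<Omega>1" and \<Omega>1_sub: "\<Omega>1 \<subseteq> V1"
    and ubar_in: "ubar \<in> \<Omega>" and \<Omega>_sub: "\<Omega> \<subseteq> U"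
    and \<psi>_an: "analytic_on_within V0 \<Omega>0 \<psi>"
    and \<psi>_range: "\<psi> ` \<Omega>0 \<subseteq> \<Omega>1"
    and graph: "M \<inter> \<Omega> = \<phi> ` \<Omega>0"
    and iso: "\<forall>u\<in>\<Omega>. bij_betw (frechet_derivative G (at u)) V1 UNIV"
  shows "\<forall>\<omega>\<in>\<Omega>0. let u = \<phi> \<omega> in
           tangent_space M \<Omega> u = {v. frechet_derivative G (at u) v = 0}
         \<and> {v. frechet_derivative G (at u) v = 0} = frechet_derivative \<phi> (at \<omega> within \<Omega>0) ` V0
         \<and> closure (J ` tangent_space M \<Omega> u) = {y. blinfun_apply (Gb u) y = 0}
         \<and> has_codim (tangent_space M \<Omega> u) CARD('m)
         \<and> has_codim (closure (J ` tangent_space M \<Omega> u)) CARD('m)"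
proof -
  have M_def: "M = {u \<in> U. G u = 0}" using \<open>M \<equiv> {u \<in> U. G u = 0}\<close> by simp
  have V0_def: "V0 = {v. frechet_derivative G (at ubar) v = 0}"
    using \<open>V0 \<equiv> {v. frechet_derivative G (at ubar) v = 0}\<close> by simp
  have \<phi>_def: "\<phi> = (\<lambda>w. w + \<psi> w)" using \<open>\<phi> \<equiv> (\<lambda>w. w + \<psi> w)\<close> by simp
  define D where "D u = frechet_derivative G (at u)" for u
  have Gd: "(G has_derivative D u) (at u)" if "u \<in> U" for u
    unfolding D_def using an_diff_UNIV[OF G_an that] by (simp add: frechet_derivative_works)
  have Dbl: "bounded_linear (D u)" if "u \<in> U" for u using Gd[OF that] by (rule has_derivative_bounded_linear)
  have Dl: "linear (D u)" if "u \<in> U" for u using Dbl[OF that] by (rule bounded_linear.linear)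
  have ubU: "ubar \<in> U" using ubar_in \<Omega>_sub by blast
  define L0 where "L0 = inv_into V1 (D ubar)"
  note I0 = inv_on_subspace[OF Dl[OF ubU] V1_sub iso[rule_format, OF ubar_in, folded D_def], folded L0_def]
  have V0D: "V0 = {v. D ubar v = 0}" by (simp add: V0_def D_def)
  have V0s: "subspace V0" unfolding V0D by (rule linear_subspace_kernel[OF Dl[OF ubU]])
  define P0 where "P0 v = v - L0 (D ubar v)" for v
  have P0bl: "bounded_linear P0" unfolding P0_def
    by (intro bounded_linear_sub bounded_linear_ident bounded_linear_compose[OF I0(1) Dbl[OF ubU]])
  have P0V0: "\<forall>v. P0 v \<in> V0"
    using I0(3) linear_diff[OF Dl[OF ubU]] by (simp add: V0D P0_def)
  have P0id: "\<forall>v\<in>V0. P0 v = v"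
    using linear_0[OF bounded_linear.linear[OF I0(1)]] by (simp add: V0D P0_def)
  have P0V1: "P0 b = 0" if "b \<in> V1" for b using I0(4) that by (simp add: P0_def)
  have P0ker: "v \<in> V1" if "P0 v = 0" for v
  proof -
    have "v = L0 (D ubar v)" using that by (simp add: P0_def)
    then show ?thesis using I0(2) by metis
  qed
  show ?thesis
  proof (intro ballI)
    fix \<omega> assume \<omega>: "\<omega> \<in> \<Omega>0"
    define u where "u = \<phi> \<omega>"
    have uMO: "u \<in> M \<inter> \<Omega>" using graph \<omega> by (auto simp: u_def)
    then have uU: "u \<in> U" and Gu: "G u = 0" and uO: "u \<in> \<Omega>" by (auto simp: M_def)
    define T where "T = D u"
    define L where "L = inv_into V1 T"
    note I = inv_on_subspace[OF Dl[OF uU, folded T_def] V1_sub iso[rule_format, OF uO, folded D_def T_def], folded L_def]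
    have Tl: "linear T" using Dl[OF uU] by (simp add: T_def)
    have GdT: "(G has_derivative T) (at u)" using Gd[OF uU] by (simp add: T_def)
    have \<psi>d: "\<psi> differentiable (at \<omega> within \<Omega>0)"
      by (rule an_diff_within[OF \<psi>_an V0s \<Omega>0_sub \<omega> P0bl P0V0 P0id])
    have "\<phi> differentiable (at \<omega> within \<Omega>0)"
      unfolding \<phi>_def using \<psi>d differentiable_add differentiable_ident by blast
    define D\<phi> where "D\<phi> = frechet_derivative \<phi> (at \<omega> within \<Omega>0)"
    have \<phi>d: "(\<phi> has_derivative D\<phi>) (at \<omega> within \<Omega>0)"
      using \<open>\<phi> differentiable (at \<omega> within \<Omega>0)\<close> by (simp add: D\<phi>_def frechet_derivative_works)
    have D\<phi>l: "linear D\<phi>" using \<phi>d has_derivative_linear by blast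
    have curve: "\<exists>\<epsilon>>0. \<exists>g'. (\<forall>t\<in>{-\<epsilon><..<\<epsilon>}. \<omega> + t *\<^sub>R a \<in> \<Omega>0 \<and>
            ((\<lambda>t. \<phi> (\<omega> + t *\<^sub>R a)) has_vector_derivative g' t) (at t)) \<and>
            continuous_on {-\<epsilon><..<\<epsilon>} g' \<and> g' 0 = D\<phi> a" if a: "a \<in> V0" for a
    proof -
      obtain \<epsilon> g' where e: "\<epsilon> > 0"
        and g: "\<forall>t\<in>{-\<epsilon><..<\<epsilon>}. \<omega> + t *\<^sub>R a \<in> \<Omega>0 \<and> ((\<lambda>t. \<psi> (\<omega> + t *\<^sub>R a)) has_vector_derivative g' t) (at t)"
        and gc: "continuous_on {-\<epsilon><..<\<epsilon>} g'"
        using an_line[OF \<psi>_an V0s \<omega> a] by blast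
      define I where "I = {-\<epsilon><..<\<epsilon>}"
      have I0: "0 \<in> I" using e by (simp add: I_def)
      have lin: "((\<lambda>t. \<omega> + t *\<^sub>R a) has_vector_derivative a) (at t)" for t
        by (auto intro!: derivative_eq_intros)
      have gd: "((\<lambda>t. \<phi> (\<omega> + t *\<^sub>R a)) has_vector_derivative a + g' t) (at t)" if "t \<in> I" for t
        unfolding \<phi>_def using has_vector_derivative_add[OF lin conjunct2[OF g[rule_format, OF that[unfolded I_def]]]] by simp
      have "((\<lambda>t. \<omega> + t *\<^sub>R a) has_derivative (\<lambda>h. h *\<^sub>R a)) (at 0 within I)"
        using lin[of 0] by (simp add: has_vector_derivative_def has_derivative_at_withinI)
      moreover have "(\<phi> has_derivative D\<phi>) (at ((\<lambda>t. \<omega> + t *\<^sub>R a) 0) within ((\<lambda>t. \<omega> + t *\<^sub>R a) ` I))"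
      proof -
        have s: "(\<lambda>t. \<omega> + t *\<^sub>R a) ` I \<subseteq> \<Omega>0" using g by (auto simp: I_def)
        show ?thesis using has_derivative_subset[OF \<phi>d s] by simp
      qed
      ultimately have "((\<phi> \<circ> (\<lambda>t. \<omega> + t *\<^sub>R a)) has_derivative (D\<phi> \<circ> (\<lambda>h. h *\<^sub>R a))) (at 0 within I)"
        by (rule diff_chain_within)
      then have "((\<lambda>t. \<phi> (\<omega> + t *\<^sub>R a)) has_derivative (\<lambda>h. h *\<^sub>R D\<phi> a)) (at 0)"
        using at_within_open[OF I0] linear_scale[OF D\<phi>l] by (simp add: I_def o_def)
      then have "((\<lambda>t. \<phi> (\<omega> + t *\<^sub>R a)) has_vector_derivative D\<phi> a) (at 0)"
        by (simp add: has_vector_derivative_def)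
      then have "a + g' 0 = D\<phi> a" using gd[OF I0] vector_derivative_unique_at by blast
      then show ?thesis
        using e g gd gc by (intro exI[of _ \<epsilon>] exI[of _ "\<lambda>t. a + g' t"] conjI)
          (auto simp: I_def intro!: continuous_intros)
    qed
    have A: "tangent_space M \<Omega> u \<subseteq> {v. T v = 0}"
    proof
      fix v assume "v \<in> tangent_space M \<Omega> u"
      then obtain \<epsilon> \<gamma> \<gamma>' where e: "\<epsilon> > 0"
        and gd: "\<forall>t\<in>{-\<epsilon><..<\<epsilon>}. (\<gamma> has_vector_derivative \<gamma>' t) (at t)"
        and gM: "\<forall>t\<in>{-\<epsilon><..<\<epsilon>}. \<gamma> t \<in> M \<inter> \<Omega>" and g0: "\<gamma> 0 = u" and gv: "\<gamma>' 0 = v"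
        unfolding tangent_space_def by blast
      have "(0::real) \<in> {-\<epsilon><..<\<epsilon>}" using e by simp
      then have "(\<gamma> has_vector_derivative v) (at 0)" using gd gv by blast
      moreover have "\<forall>t\<in>{-\<epsilon><..<\<epsilon>}. G (\<gamma> t) = 0" using gM by (auto simp: M_def)
      ultimately have "T v = 0" using e GdT g0 by (intro deriv_zero_curve[of \<gamma> v \<epsilon> G T]) auto
      then show "v \<in> {v. T v = 0}" by simp
    qed
    have B: "{v. T v = 0} \<subseteq> D\<phi> ` V0"
    proof
      fix v assume v: "v \<in> {v. T v = 0}"
      obtain a b where ab: "v = a + b" "a \<in> V0" "b \<in> V1" using dsum(2) by blast
      obtain \<epsilon> g' where e: "\<epsilon> > 0"
        and g: "\<forall>t\<in>{-\<epsilon><..<\<epsilon>}. \<omega> + t *\<^sub>R a \<in> \<Omega>0 \<and> ((\<lambda>t. \<phi> (\<omega> + t *\<^sub>R a)) has_vector_derivative g' t) (at t)"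
        and g0: "g' 0 = D\<phi> a"
        using curve[OF ab(2)] by blast
      have d0: "((\<lambda>t. \<phi> (\<omega> + t *\<^sub>R a)) has_vector_derivative D\<phi> a) (at 0)"
      proof -
        have "(0::real) \<in> {-\<epsilon><..<\<epsilon>}" using e by simp
        then have "((\<lambda>t. \<phi> (\<omega> + t *\<^sub>R a)) has_vector_derivative g' 0) (at 0)" using g by blast
        then show ?thesis using g0 by simp
      qed
      have inM: "\<phi> (\<omega> + t *\<^sub>R a) \<in> M \<inter> \<Omega>" if "t \<in> {-\<epsilon><..<\<epsilon>}" for t
        using g that graph by blast
      have "T (D\<phi> a) = 0"
      proof (rule deriv_zero_curve[OF d0 e])
        show "\<forall>t\<in>{-\<epsilon><..<\<epsilon>}. G (\<phi> (\<omega> + t *\<^sub>R a)) = 0" using inM by (auto simp: M_def)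
        show "(G has_derivative T) (at (\<phi> (\<omega> + 0 *\<^sub>R a)))" using GdT by (simp add: u_def)
      qed
      have "((\<lambda>t. \<phi> (\<omega> + t *\<^sub>R a) - (\<omega> + t *\<^sub>R a)) has_vector_derivative D\<phi> a - a) (at 0)"
        by (intro has_vector_derivative_diff d0) (auto intro!: derivative_eq_intros)
      then have "P0 (D\<phi> a - a) = 0"
      proof (rule deriv_zero_curve[OF _ e])
        show "\<forall>t\<in>{-\<epsilon><..<\<epsilon>}. P0 (\<phi> (\<omega> + t *\<^sub>R a) - (\<omega> + t *\<^sub>R a)) = 0"
        proof
          fix t assume t: "t \<in> {-\<epsilon><..<\<epsilon>}"
          then have "\<omega> + t *\<^sub>R a \<in> \<Omega>0" using g by blast
          then have "\<psi> (\<omega> + t *\<^sub>R a) \<in> V1" using \<psi>_range \<Omega>1_sub by blast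
          then show "P0 (\<phi> (\<omega> + t *\<^sub>R a) - (\<omega> + t *\<^sub>R a)) = 0" using P0V1 by (simp add: \<phi>_def)
        qed
        show "(P0 has_derivative P0) (at (\<phi> (\<omega> + 0 *\<^sub>R a) - (\<omega> + 0 *\<^sub>R a)))"
          by (rule bounded_linear_imp_has_derivative[OF P0bl])
      qed
      then have w1: "D\<phi> a - a \<in> V1" by (rule P0ker)
      have "v - D\<phi> a = b - (D\<phi> a - a)" using ab by simp
      moreover have "b - (D\<phi> a - a) \<in> V1" by (rule subspace_diff[OF V1_sub ab(3) w1])
      ultimately have "v - D\<phi> a \<in> V1" by (simp only:)
      moreover have "T (v - D\<phi> a) = 0" using v \<open>T (D\<phi> a) = 0\<close> linear_diff[OF Tl] by simp
      ultimately have "v - D\<phi> a = L 0" using I(4) by metis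
      then have "v = D\<phi> a" using linear_0[OF bounded_linear.linear[OF I(1)]] by simp
      then show "v \<in> D\<phi> ` V0" using ab by blast
    qed
    have C: "D\<phi> ` V0 \<subseteq> tangent_space M \<Omega> u"
    proof
      fix v assume "v \<in> D\<phi> ` V0"
      then obtain a where a: "a \<in> V0" "v = D\<phi> a" by blast
      obtain \<epsilon> g' where e: "\<epsilon> > 0"
        and g: "\<forall>t\<in>{-\<epsilon><..<\<epsilon>}. \<omega> + t *\<^sub>R a \<in> \<Omega>0 \<and> ((\<lambda>t. \<phi> (\<omega> + t *\<^sub>R a)) has_vector_derivative g' t) (at t)"
        and gc: "continuous_on {-\<epsilon><..<\<epsilon>} g'" and g0: "g' 0 = D\<phi> a"
        using curve[OF a(1)] by blast
      have h1: "\<forall>t\<in>{-\<epsilon><..<\<epsilon>}. ((\<lambda>t. \<phi> (\<omega> + t *\<^sub>R a)) has_vector_derivative g' t) (at t)"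
        using g by blast
      have h2: "\<forall>t\<in>{-\<epsilon><..<\<epsilon>}. \<phi> (\<omega> + t *\<^sub>R a) \<in> M \<inter> \<Omega>"
        using g graph by blast
      have h3: "(\<lambda>t. \<phi> (\<omega> + t *\<^sub>R a)) 0 = u" by (simp add: u_def)
      have h4: "g' 0 = v" using g0 a by simp
      show "v \<in> tangent_space M \<Omega> u"
        unfolding tangent_space_def using e h1 gc h2 h3 h4 by blast
    qed
    have tang: "tangent_space M \<Omega> u = {v. T v = 0}" using A B C by blast
    have ker: "{v. T v = 0} = D\<phi> ` V0" using A B C by blast
    have JL: "bounded_linear (\<lambda>y. J (L y))" by (rule bounded_linear_compose[OF J_bl I(1)])
    have clo: "closure (J ` tangent_space M \<Omega> u) = {y. blinfun_apply (Gb u) y = 0}"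
      unfolding tang
      by (rule closure_part[OF J_bl J_dense _ Tl I(1) I(3)]) (use Gb_ext uU in \<open>simp add: T_def D_def\<close>)
    have c1: "has_codim (tangent_space M \<Omega> u) CARD('m)"
      using codim_part[OF Tl bounded_linear.linear[OF I(1)] I(3)] tang by simp
    have GbJL: "\<forall>y. blinfun_apply (Gb u) (J (L y)) = y" using Gb_ext uU I(3) by (simp add: T_def D_def)
    have c2: "has_codim (closure (J ` tangent_space M \<Omega> u)) CARD('m)"
      using codim_part[OF bounded_linear.linear[OF blinfun.bounded_linear_right] bounded_linear.linear[OF JL] GbJL] clo by simp
    show "let u = \<phi> \<omega> in
           tangent_space M \<Omega> u = {v. frechet_derivative G (at u) v = 0}
         \<and> {v. frechet_derivative G (at u) v = 0} = frechet_derivative \<phi> (at \<omega> within \<Omega>0) ` V0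
         \<and> closure (J ` tangent_space M \<Omega> u) = {y. blinfun_apply (Gb u) y = 0}
         \<and> has_codim (tangent_space M \<Omega> u) CARD('m)
         \<and> has_codim (closure (J ` tangent_space M \<Omega> u)) CARD('m)"
      unfolding Let_def u_def[symmetric] D\<phi>_def[symmetric]
      using tang ker clo c1 c2 by (simp add: T_def D_def)
  qed
qed

end
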